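(* For every finite simple graph $G$, the non-cover complex $\mathcal{NC}(G)$ is $(|V(G)|-i\gamma_w(G)-1)$-collapsible.
   Context: $\mathcal{NC}(G)$ is the simplicial complex on $V(G)$ whose faces are the sets $W\subseteq V(G)$ such that $V(G)\setminus W$ contains both endpoints of some edge (if $G$ has no edges it is the void complex). For $A,W\subseteq V(G)$, $W$ weakly dominates $A$ if every $w\in A$ either lies in $W$ or has a neighbor in $W$; $\gamma_w(G;A)$ is the minimum size of a set weakly dominating $A$; the weak independent domination number is $i\gamma_w(G)=\max\{\gamma_w(G;I): I\text{ an independent set of }G\}$. A face of a simplicial complex $X$ is free if it lies in a unique facet; an elementary $d$-collapse deletes all faces containing a free face of size at most $d$; $X$ is $d$-collapsible if the void complex is reachable by finitely many elementary $d$-collapses. *)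

theory Defs
  imports Main
begin

definition simple_graph :: "'a set \<Rightarrow> 'a set set \<Rightarrow> bool" where
  "simple_graph V E \<longleftrightarrow> finite V \<and> (\<forall>e\<in>E. e \<subseteq> V \<and> card e = 2)"

definition adjacent :: "'a set set \<Rightarrow> 'a \<Rightarrow> 'a \<Rightarrow> bool" where
  "adjacent E u v \<longleftrightarrow> {u, v} \<in> E"

definition independent_set :: "'a set \<Rightarrow> 'a set set \<Rightarrow> 'a set \<Rightarrow> bool" where
  "independent_set V E I \<longleftrightarrow> I \<subseteq> V \<and> (\<forall>u\<in>I. \<forall>v\<in>I. \<not> adjacent E u v)"

text \<open>The non-cover complex, as a set of faces. It is the empty set of faces
(the void complex) when there are no edges.\<close>
definition non_cover_complex :: "'a set \<Rightarrow> 'a set set \<Rightarrow> 'a set set" where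
  "non_cover_complex V E = {W. W \<subseteq> V \<and> (\<exists>e\<in>E. e \<subseteq> V - W)}"

definition weakly_dominates :: "'a set set \<Rightarrow> 'a set \<Rightarrow> 'a set \<Rightarrow> bool" where
  "weakly_dominates E W A \<longleftrightarrow> (\<forall>w\<in>A. w \<in> W \<or> (\<exists>u\<in>W. adjacent E u w))"

definition gamma_w :: "'a set \<Rightarrow> 'a set set \<Rightarrow> 'a set \<Rightarrow> nat" where
  "gamma_w V E A = Min {card W | W. W \<subseteq> V \<and> weakly_dominates E W A}"

definition i_gamma_w :: "'a set \<Rightarrow> 'a set set \<Rightarrow> nat" where
  "i_gamma_w V E = Max {gamma_w V E I | I. independent_set V E I}"

definition facet :: "'a set set \<Rightarrow> 'a set \<Rightarrow> bool" where
  "facet X \<tau> \<longleftrightarrow> \<tau> \<in> X \<and> \<not> (\<exists>\<rho>\<in>X. \<tau> \<subset> \<rho>)"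

definition free_face :: "'a set set \<Rightarrow> 'a set \<Rightarrow> bool" where
  "free_face X \<sigma> \<longleftrightarrow> \<sigma> \<in> X \<and> (\<exists>!\<tau>. facet X \<tau> \<and> \<sigma> \<subseteq> \<tau>)"

definition elementary_collapse :: "int \<Rightarrow> 'a set set \<Rightarrow> 'a set set \<Rightarrow> bool" where
  "elementary_collapse d X Y \<longleftrightarrow>
     (\<exists>\<sigma>. free_face X \<sigma> \<and> int (card \<sigma>) \<le> d \<and> Y = X - {\<tau>. \<sigma> \<subseteq> \<tau>})"

definition collapsible :: "int \<Rightarrow> 'a set set \<Rightarrow> bool" where
  "collapsible d X \<longleftrightarrow> (elementary_collapse d)\<^sup>*\<^sup>* X {}"

end

theory Submission
  imports Defs
begin

lemma card_ins_le: "card (insert x A) \<le> card A + 1"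
  by (cases "finite A") (auto simp: card_insert_if)

lemma ec_mono: "elementary_collapse d X Y \<Longrightarrow> d \<le> d' \<Longrightarrow> elementary_collapse d' X Y"
  unfolding elementary_collapse_def by force

lemma collapsible_mono: "collapsible d X \<Longrightarrow> d \<le> d' \<Longrightarrow> collapsible d' X"
  unfolding collapsible_def using mono_rtranclp[of "elementary_collapse d" "elementary_collapse d'"]
  using ec_mono by blast

lemma ec_sub: "elementary_collapse d X Y \<Longrightarrow> Y \<subseteq> X"
  unfolding elementary_collapse_def by auto

lemma psub_ins:
  assumes "v \<notin> a" "v \<notin> b"
  shows "insert v a \<subset> insert v b \<longleftrightarrow> a \<subset> b"
proof -
  have s: "insert v a \<subseteq> insert v b \<longleftrightarrow> a \<subseteq> b" using assms by blast
  have e: "insert v a = insert v b \<longleftrightarrow> a = b"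
  proof
    assume "insert v a = insert v b"
    then have "insert v a - {v} = insert v b - {v}" by simp
    then show "a = b" using assms by simp
  qed simp
  show ?thesis unfolding psubset_eq using s e by blast
qed

lemma facet_ins:
  assumes D: "\<forall>\<tau>\<in>D. v \<notin> \<tau>" and L: "\<forall>\<tau>\<in>L. v \<notin> \<tau>" and r: "\<rho> \<in> L"
  shows "facet (D \<union> insert v ` L) (insert v \<rho>) \<longleftrightarrow> facet L \<rho>"
proof
  assume f: "facet (D \<union> insert v ` L) (insert v \<rho>)"
  show "facet L \<rho>" unfolding facet_def
  proof (intro conjI r notI)
    assume "\<exists>x\<in>L. \<rho> \<subset> x"
    then obtain x where x: "x \<in> L" "\<rho> \<subset> x" by blast
    have vx: "v \<notin> x" "v \<notin> \<rho>" using x(1) r L by auto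
    have "insert v \<rho> \<subset> insert v x"
    proof
      show "insert v \<rho> \<subseteq> insert v x" using x(2) by blast
      show "insert v \<rho> \<noteq> insert v x"
      proof
        assume "insert v \<rho> = insert v x"
        then have "insert v \<rho> - {v} = insert v x - {v}" by simp
        then have "\<rho> = x" using vx by simp
        then show False using x(2) by simp
      qed
    qed
    then show False using f x unfolding facet_def by blast
  qed
next
  assume f: "facet L \<rho>"
  show "facet (D \<union> insert v ` L) (insert v \<rho>)" unfolding facet_def
  proof (intro conjI notI)
    show "insert v \<rho> \<in> D \<union> insert v ` L" using r by blast
    assume "\<exists>x\<in>D \<union> insert v ` L. insert v \<rho> \<subset> x"
    then obtain x where x: "x \<in> D \<union> insert v ` L" "insert v \<rho> \<subset> x" by blast
    then have "x \<notin> D" using D by blast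
    then obtain y where y: "y \<in> L" "x = insert v y" using x by blast
    have "\<rho> \<subset> y" using x(2) y psub_ins[of v \<rho> y] L r by simp
    then show False using f y unfolding facet_def by blast
  qed
qed

lemma link_step:
  assumes D: "\<forall>\<tau>\<in>D. v \<notin> \<tau>" and L: "\<forall>\<tau>\<in>L. v \<notin> \<tau>"
    and ec: "elementary_collapse (d - 1) L L'"
  shows "elementary_collapse d (D \<union> insert v ` L) (D \<union> insert v ` L')"
proof -
  obtain \<sigma> where fr: "free_face L \<sigma>" and c: "int (card \<sigma>) \<le> d - 1"
    and L': "L' = L - {\<tau>. \<sigma> \<subseteq> \<tau>}"
    using ec unfolding elementary_collapse_def by blast
  have sL: "\<sigma> \<in> L" using fr unfolding free_face_def by blast
  obtain \<tau>0 where t0: "facet L \<tau>0" "\<sigma> \<subseteq> \<tau>0"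
    and un: "\<And>\<tau>. facet L \<tau> \<Longrightarrow> \<sigma> \<subseteq> \<tau> \<Longrightarrow> \<tau> = \<tau>0"
    using fr unfolding free_face_def by blast
  have t0L: "\<tau>0 \<in> L" using t0 unfolding facet_def by blast
  have vs: "v \<notin> \<sigma>" using L sL by blast
  have "free_face (D \<union> insert v ` L) (insert v \<sigma>)"
    unfolding free_face_def
  proof (rule conjI)
    show "insert v \<sigma> \<in> D \<union> insert v ` L" using sL by blast
  next
    show "\<exists>!\<tau>. facet (D \<union> insert v ` L) \<tau> \<and> insert v \<sigma> \<subseteq> \<tau>"
    proof (rule ex1I)
    show "facet (D \<union> insert v ` L) (insert v \<tau>0) \<and> insert v \<sigma> \<subseteq> insert v \<tau>0"
      using facet_ins[OF D L t0L] t0 by blast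
    fix \<tau> assume a: "facet (D \<union> insert v ` L) \<tau> \<and> insert v \<sigma> \<subseteq> \<tau>"
    then have "\<tau> \<in> D \<union> insert v ` L" unfolding facet_def by blast
    moreover have "v \<in> \<tau>" using a by blast
    ultimately obtain \<rho> where r: "\<rho> \<in> L" "\<tau> = insert v \<rho>" using D by blast
    have "facet L \<rho>" using facet_ins[OF D L r(1)] a r by simp
    moreover have "\<sigma> \<subseteq> \<rho>" using a r vs by blast
    ultimately show "\<tau> = insert v \<tau>0" using un r by blast
  qed
  qed
  moreover have "int (card (insert v \<sigma>)) \<le> d" using c card_ins_le[of v \<sigma>] by linarith
  moreover have "D \<union> insert v ` L' = (D \<union> insert v ` L) - {\<tau>. insert v \<sigma> \<subseteq> \<tau>}"
  proof -
    have "\<And>\<rho>. \<rho> \<in> L \<Longrightarrow> (insert v \<sigma> \<subseteq> insert v \<rho>) = (\<sigma> \<subseteq> \<rho>)" using vs L by blast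
    moreover have "\<And>\<rho>. \<rho> \<in> D \<Longrightarrow> \<not> insert v \<sigma> \<subseteq> \<rho>" using D by blast
    ultimately show ?thesis unfolding L' by blast
  qed
  ultimately show ?thesis unfolding elementary_collapse_def by blast
qed

lemma link_steps:
  assumes "(elementary_collapse (d - 1))\<^sup>*\<^sup>* L M"
    and D: "\<forall>\<tau>\<in>D. v \<notin> \<tau>" and L: "\<forall>\<tau>\<in>L. v \<notin> \<tau>"
  shows "(elementary_collapse d)\<^sup>*\<^sup>* (D \<union> insert v ` L) (D \<union> insert v ` M) \<and> M \<subseteq> L"
  using assms(1)
proof (induction rule: rtranclp_induct)
  case base
  then show ?case by simp
next
  case (step y z)
  have yL: "\<forall>\<tau>\<in>y. v \<notin> \<tau>" using step L by blast
  have "elementary_collapse d (D \<union> insert v ` y) (D \<union> insert v ` z)"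
    using link_step[OF D yL step(2)] .
  then show ?case using step ec_sub[OF step(2)] by auto
qed

lemma decomp_collapsible:
  assumes "collapsible (d - 1) L" "collapsible d D"
    and D: "\<forall>\<tau>\<in>D. v \<notin> \<tau>" and L: "\<forall>\<tau>\<in>L. v \<notin> \<tau>"
  shows "collapsible d (D \<union> insert v ` L)"
proof -
  have "(elementary_collapse d)\<^sup>*\<^sup>* (D \<union> insert v ` L) (D \<union> insert v ` {})"
    using link_steps[OF _ D L] assms(1) unfolding collapsible_def by blast
  then show ?thesis using assms(2) unfolding collapsible_def by simp
qed

lemma full_collapsible:
  assumes "0 \<le> d"
  shows "collapsible d {W. W \<subseteq> S}"
proof -
  have f: "facet {W. W \<subseteq> S} \<tau> \<longleftrightarrow> \<tau> = S" for \<tau>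
    unfolding facet_def by blast
  have "free_face {W. W \<subseteq> S} {}" unfolding free_face_def f by blast
  then have "elementary_collapse d {W. W \<subseteq> S} {}"
    unfolding elementary_collapse_def using assms by force
  then show ?thesis unfolding collapsible_def by blast
qed

lemma ins_img: "v \<in> W \<Longrightarrow> \<forall>x\<in>X. v \<notin> x \<Longrightarrow> W \<in> insert v ` X \<longleftrightarrow> W - {v} \<in> X"
proof -
  assume a: "v \<in> W" "\<forall>x\<in>X. v \<notin> x"
  show ?thesis
  proof
    assume "W \<in> insert v ` X"
    then obtain x where x: "x \<in> X" "W = insert v x" by blast
    then have "W - {v} = x" using a by auto
    then show "W - {v} \<in> X" using x by simp
  next
    assume "W - {v} \<in> X"
    moreover have "W = insert v (W - {v})" using a by auto
    ultimately show "W \<in> insert v ` X" by blast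
  qed
qed

lemma nc_decomp:
  assumes "v \<in> V" "\<forall>e\<in>E. e \<subseteq> V"
  shows "non_cover_complex V E = non_cover_complex (V - {v}) ((\<lambda>e. e - {v}) ` E)
          \<union> insert v ` non_cover_complex (V - {v}) {e\<in>E. v \<notin> e}"
proof (rule set_eqI)
  fix W
  show "W \<in> non_cover_complex V E \<longleftrightarrow> W \<in> non_cover_complex (V - {v}) ((\<lambda>e. e - {v}) ` E)
          \<union> insert v ` non_cover_complex (V - {v}) {e\<in>E. v \<notin> e}"
  proof (cases "v \<in> W")
    case True
    have "W \<in> non_cover_complex V E \<longleftrightarrow> W - {v} \<in> non_cover_complex (V - {v}) {e\<in>E. v \<notin> e}"
      unfolding non_cover_complex_def using True assms by blast
    moreover have "W \<notin> non_cover_complex (V - {v}) ((\<lambda>e. e - {v}) ` E)"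
      unfolding non_cover_complex_def using True by blast
    moreover have "\<forall>x\<in>non_cover_complex (V - {v}) {e\<in>E. v \<notin> e}. v \<notin> x"
      unfolding non_cover_complex_def by blast
    ultimately show ?thesis using ins_img[OF True] by blast
  next
    case False
    have "W \<notin> insert v ` X" for X using False by blast
    moreover have "W \<in> non_cover_complex V E \<longleftrightarrow> W \<in> non_cover_complex (V - {v}) ((\<lambda>e. e - {v}) ` E)"
    proof
      assume "W \<in> non_cover_complex V E"
      then obtain e where e: "W \<subseteq> V" "e \<in> E" "e \<subseteq> V - W" unfolding non_cover_complex_def by blast
      have "e - {v} \<in> (\<lambda>e. e - {v}) ` E" using e(2) by (rule imageI)
      moreover have "e - {v} \<subseteq> (V - {v}) - W" using e(3) by blast
      moreover have "W \<subseteq> V - {v}" using e(1) False by blast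
      ultimately show "W \<in> non_cover_complex (V - {v}) ((\<lambda>e. e - {v}) ` E)"
        unfolding non_cover_complex_def by blast
    next
      assume "W \<in> non_cover_complex (V - {v}) ((\<lambda>e. e - {v}) ` E)"
      then obtain e' where e': "W \<subseteq> V - {v}" "e' \<in> (\<lambda>e. e - {v}) ` E" "e' \<subseteq> (V - {v}) - W"
        unfolding non_cover_complex_def by blast
      then obtain e where e: "e \<in> E" "e' = e - {v}" by blast
      have "e \<subseteq> V" using e(1) assms(2) by blast
      then have "e \<subseteq> V - W" using e' e False by blast
      moreover have "W \<subseteq> V" using e'(1) by blast
      ultimately show "W \<in> non_cover_complex V E" unfolding non_cover_complex_def using e(1) by blast
    qed
    ultimately show ?thesis by blast
  qed
qed

lemma gamma_fin: "finite V \<Longrightarrow> finite {card W | W. W \<subseteq> V \<and> P W}"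
proof -
  assume "finite V"
  have "{card W | W. W \<subseteq> V \<and> P W} \<subseteq> card ` Pow V" by blast
  then show ?thesis using \<open>finite V\<close> finite_subset by blast
qed

lemma gamma_le: "finite V \<Longrightarrow> W \<subseteq> V \<Longrightarrow> weakly_dominates E W A \<Longrightarrow> gamma_w V E A \<le> card W"
  unfolding gamma_w_def by (rule Min_le) (auto intro: gamma_fin)

lemma gamma_att:
  assumes "finite V" "A \<subseteq> V"
  shows "\<exists>W. W \<subseteq> V \<and> weakly_dominates E W A \<and> gamma_w V E A = card W"
proof -
  have "weakly_dominates E A A" unfolding weakly_dominates_def by blast
  then have ne: "{card W | W. W \<subseteq> V \<and> weakly_dominates E W A} \<noteq> {}" using assms by blast
  have "gamma_w V E A \<in> {card W | W. W \<subseteq> V \<and> weakly_dominates E W A}"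
    unfolding gamma_w_def by (rule Min_in[OF gamma_fin[OF assms(1)] ne])
  then show ?thesis by blast
qed

lemma gamma_le_card: "finite V \<Longrightarrow> A \<subseteq> V \<Longrightarrow> gamma_w V E A \<le> card A"
  by (rule gamma_le) (auto simp: weakly_dominates_def)

lemma igw_fin: "finite V \<Longrightarrow> finite {gamma_w V E I | I. independent_set V E I}"
proof -
  assume "finite V"
  have "{gamma_w V E I | I. independent_set V E I} \<subseteq> gamma_w V E ` Pow V"
    unfolding independent_set_def by blast
  then show ?thesis using \<open>finite V\<close> finite_subset by blast
qed

lemma igw_ge: "finite V \<Longrightarrow> independent_set V E I \<Longrightarrow> gamma_w V E I \<le> i_gamma_w V E"
  unfolding i_gamma_w_def by (rule Max_ge) (auto intro: igw_fin)

lemma igw_att: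
  assumes "finite V"
  shows "\<exists>I. independent_set V E I \<and> i_gamma_w V E = gamma_w V E I"
proof -
  have "independent_set V E {}" unfolding independent_set_def by blast
  then have ne: "{gamma_w V E I | I. independent_set V E I} \<noteq> {}" by blast
  have "i_gamma_w V E \<in> {gamma_w V E I | I. independent_set V E I}"
    unfolding i_gamma_w_def by (rule Max_in[OF igw_fin[OF assms] ne])
  then show ?thesis by blast
qed

lemma small_pair: "finite e \<Longrightarrow> e \<noteq> {} \<Longrightarrow> card e \<le> 2 \<Longrightarrow> \<exists>a b. e = {a, b}"
proof -
  assume a: "finite e" "e \<noteq> {}" "card e \<le> 2"
  then have "card e = 1 \<or> card e = 2" using card_gt_0_iff[of e] by linarith
  then show ?thesis
  proof
    assume "card e = 1" then obtain x where "e = {x}" by (metis One_nat_def card_1_singleton_iff)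
    then show ?thesis by blast
  next
    assume "card e = 2" then show ?thesis using card_2_iff by metis
  qed
qed

lemma diff_pair:
  assumes "finite e" "card e \<le> 2" "e - {v} = {u, w}" "u \<noteq> w"
  shows "e = {u, w}"
proof -
  have "v \<notin> e"
  proof
    assume "v \<in> e"
    have uw: "u \<in> e - {v}" "w \<in> e - {v}" using assms(3) by simp_all
    have "{u, w, v} \<subseteq> e" using uw \<open>v \<in> e\<close> by simp
    moreover have "card {u, w, v} = 3" using uw assms(4) by simp
    ultimately have "3 \<le> card e" using card_mono[OF assms(1)] by metis
    then show False using assms(2) by simp
  qed
  then have "e = e - {v}" by simp
  then show ?thesis using assms(3) by simp
qed

lemma diff_single:
  assumes "e - {v} = {a}"
  shows "e = {a} \<or> e = {a, v}"
proof (cases "v \<in> e")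
  case True
  have "e = insert v (e - {v})" using True by auto
  then show ?thesis using assms by (simp add: insert_commute)
next
  case False
  then have "e = e - {v}" by simp
  then show ?thesis using assms by simp
qed

lemma main:
  assumes "finite V" "\<forall>e\<in>E. e \<subseteq> V \<and> e \<noteq> {} \<and> card e \<le> 2"
  shows "collapsible (int (card V) - int (i_gamma_w V E) - 1) (non_cover_complex V E)"
  using assms
proof (induction "card V" arbitrary: V E rule: less_induct)
  case less
  note fin = less.prems(1) and Eok = less.prems(2)
  show ?case
  proof (cases "E = {}")
    case True
    then have "non_cover_complex V E = {}" unfolding non_cover_complex_def by blast
    then show ?thesis unfolding collapsible_def by simp
  next
    case False
    then obtain e0 where e0: "e0 \<in> E" by blast
    obtain I0 where I0: "independent_set V E I0" and h: "i_gamma_w V E = gamma_w V E I0"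
      using igw_att[OF fin] by blast
    have I0V: "I0 \<subseteq> V" using I0 unfolding independent_set_def by blast
    have e0V: "e0 \<subseteq> V" "e0 \<noteq> {}" "card e0 \<le> 2" using Eok e0 by auto
    have "finite e0" using e0V(1) fin by (rule finite_subset)
    then obtain a b where ab: "e0 = {a, b}"
      using small_pair[of e0] e0V by blast
    have "\<not> e0 \<subseteq> I0"
    proof
      assume "e0 \<subseteq> I0"
      then show False using I0 e0 ab unfolding independent_set_def adjacent_def by blast
    qed
    then obtain v where vI: "v \<notin> I0" and ve: "v \<in> e0" by blast
    have vV: "v \<in> V" using ve e0V by blast
    define V' where "V' = V - {v}"
    define Ed where "Ed = (\<lambda>e. e - {v}) ` E"
    define El where "El = {e\<in>E. v \<notin> e}"
    define n where "n = card V"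
    define hh where "hh = gamma_w V E I0"
    define d where "d = int n - int hh - 1"
    have finV': "finite V'" using fin V'_def by blast
    have cV': "card V' = n - 1" unfolding V'_def n_def using vV fin by simp
    have "card V > 0" using vV fin card_gt_0_iff by blast
    then have npos: "n \<ge> 1" unfolding n_def by simp
    have ltV': "card V' < card V" using cV' npos n_def by linarith
    have I0V': "I0 \<subseteq> V'" using I0V vI V'_def by blast
    have dec: "non_cover_complex V E = non_cover_complex V' Ed \<union> insert v ` non_cover_complex V' El"
    proof -
      have "\<forall>e\<in>E. e \<subseteq> V" using Eok by blast
      then show ?thesis unfolding V'_def Ed_def El_def by (rule nc_decomp[OF vV])
    qed
    have Dv: "\<forall>\<tau>\<in>non_cover_complex V' Ed. v \<notin> \<tau>" unfolding non_cover_complex_def V'_def by blast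
    have Lv: "\<forall>\<tau>\<in>non_cover_complex V' El. v \<notin> \<tau>" unfolding non_cover_complex_def V'_def by blast
    have Elok: "\<forall>e\<in>El. e \<subseteq> V' \<and> e \<noteq> {} \<and> card e \<le> 2"
      using Eok unfolding El_def V'_def by blast
    have IHl: "collapsible (int (card V') - int (i_gamma_w V' El) - 1) (non_cover_complex V' El)"
      using less.hyps[OF ltV' finV' Elok] .
    have I0l: "independent_set V' El I0"
      using I0 I0V' unfolding independent_set_def adjacent_def El_def by blast
    obtain Wl where Wl: "Wl \<subseteq> V'" "weakly_dominates El Wl I0" "gamma_w V' El I0 = card Wl"
      using gamma_att[OF finV' I0V'] by blast
    have "weakly_dominates E Wl I0" using Wl(2) unfolding weakly_dominates_def adjacent_def El_def by blast
    then have "hh \<le> card Wl" unfolding hh_def using gamma_le[OF fin] Wl(1) V'_def by blast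
    also have "\<dots> \<le> i_gamma_w V' El" using Wl(3) igw_ge[OF finV' I0l] by simp
    finally have hl: "hh \<le> i_gamma_w V' El" .
    have lk: "collapsible (d - 1) (non_cover_complex V' El)"
      by (rule collapsible_mono[OF IHl]) (use cV' npos hl d_def in linarith)
    have del: "collapsible d (non_cover_complex V' Ed)"
    proof (cases "{v} \<in> E")
      case True
      then have "{} \<in> Ed" unfolding Ed_def by force
      then have "non_cover_complex V' Ed = {W. W \<subseteq> V'}" unfolding non_cover_complex_def by blast
      moreover have "hh \<le> n - 1" unfolding hh_def
        using gamma_le_card[OF fin I0V, of E] card_mono[OF finV' I0V'] cV' by linarith
      moreover have "0 \<le> d" using \<open>hh \<le> n - 1\<close> npos d_def by linarith
      ultimately show ?thesis using full_collapsible by simp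
    next
      case nl: False
      have Edok: "\<forall>e\<in>Ed. e \<subseteq> V' \<and> e \<noteq> {} \<and> card e \<le> 2"
      proof
        fix e' assume "e' \<in> Ed"
        then obtain e where e: "e \<in> E" "e' = e - {v}" unfolding Ed_def by blast
        have "finite e" using e Eok fin finite_subset by blast
        have "e' \<noteq> {}"
        proof
          assume "e' = {}"
          then have "e = {v}" using e Eok by blast
          then show False using nl e by blast
        qed
        moreover have "card e' \<le> 2" using e Eok card_mono[OF \<open>finite e\<close>, of e'] by force
        ultimately show "e' \<subseteq> V' \<and> e' \<noteq> {} \<and> card e' \<le> 2" using e Eok V'_def by blast
      qed
      have IHd: "collapsible (int (card V') - int (i_gamma_w V' Ed) - 1) (non_cover_complex V' Ed)"
        using less.hyps[OF ltV' finV' Edok] .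
      define I' where "I' = {u\<in>I0. {u, v} \<notin> E}"
      have I'V: "I' \<subseteq> V'" using I0V' I'_def by blast
      have pairE: "e = {u, w}" if "e \<in> E" "e - {v} = {u, w}" "u \<noteq> w" for e u w
      proof -
        have eV: "e \<subseteq> V" "card e \<le> 2" using that(1) Eok by auto
        have "finite e" using finite_subset[OF eV(1) fin] .
        then show ?thesis by (rule diff_pair[OF _ eV(2) that(2) that(3)])
      qed
      have I'ind: "independent_set V' Ed I'"
        unfolding independent_set_def
      proof (intro conjI I'V ballI notI)
        fix x y assume xy: "x \<in> I'" "y \<in> I'" "adjacent Ed x y"
        then obtain e where e: "e \<in> E" "e - {v} = {x, y}" unfolding adjacent_def Ed_def by blast
        show False
        proof (cases "x = y")
          case False
          then have "e = {x, y}" using pairE e by blast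
          then show ?thesis using I0 xy e I'_def unfolding independent_set_def adjacent_def by blast
        next
          case True
          then have "e = {x} \<or> e = {x, v}" using diff_single e by simp
          then show ?thesis
          proof
            assume "e = {x}"
            then have "adjacent E x x" using e unfolding adjacent_def by simp
            then show False using I0 xy I'_def unfolding independent_set_def by blast
          next
            assume "e = {x, v}" then show False using e xy I'_def by blast
          qed
        qed
      qed
      obtain Wd where Wd: "Wd \<subseteq> V'" "weakly_dominates Ed Wd I'" "gamma_w V' Ed I' = card Wd"
        using gamma_att[OF finV' I'V] by blast
      have "weakly_dominates E (insert v Wd) I0"
        unfolding weakly_dominates_def
      proof
        fix w assume w: "w \<in> I0"
        show "w \<in> insert v Wd \<or> (\<exists>u\<in>insert v Wd. adjacent E u w)"
        proof (cases "{w, v} \<in> E")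
          case True
          then have "adjacent E v w" unfolding adjacent_def by (simp add: insert_commute)
          then show ?thesis by blast
        next
          case False
          then have "w \<in> I'" using w I'_def by blast
          then have "w \<in> Wd \<or> (\<exists>u\<in>Wd. adjacent Ed u w)"
            using Wd(2) unfolding weakly_dominates_def by blast
          then show ?thesis
          proof
            assume "\<exists>u\<in>Wd. adjacent Ed u w"
            then obtain u e where u: "u \<in> Wd" "e \<in> E" "e - {v} = {u, w}"
              unfolding adjacent_def Ed_def by blast
            show ?thesis
            proof (cases "u = w")
              case True then show ?thesis using u by blast
            next
              case False
              then have "e = {u, w}" using pairE u by blast
              then show ?thesis using u unfolding adjacent_def by blast
            qed
          qed blast
        qed
      qed
      then have "hh \<le> card (insert v Wd)" unfolding hh_def
        using gamma_le[OF fin] Wd(1) vV V'_def by blast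
      also have "\<dots> \<le> card Wd + 1" by (rule card_ins_le)
      also have "\<dots> \<le> i_gamma_w V' Ed + 1" using Wd(3) igw_ge[OF finV' I'ind] by simp
      finally have hd: "hh \<le> i_gamma_w V' Ed + 1" .
      show ?thesis
        by (rule collapsible_mono[OF IHd]) (use cV' npos hd d_def in linarith)
    qed
    have "collapsible d (non_cover_complex V E)"
      unfolding dec using decomp_collapsible[OF lk del Dv Lv] .
    then show ?thesis using h unfolding d_def hh_def n_def by simp
  qed
qed

theorem corollary3p1:
  fixes V :: "'a set" and E :: "'a set set"
  assumes "simple_graph V E"
  shows "collapsible (int (card V) - int (i_gamma_w V E) - 1) (non_cover_complex V E)"
proof (rule main)
  show "finite V" using assms unfolding simple_graph_def by blast
  show "\<forall>e\<in>E. e \<subseteq> V \<and> e \<noteq> {} \<and> card e \<le> 2"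
    using assms unfolding simple_graph_def by fastforce
qed

end
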